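(* Let $Z\in\mathbb{R}^{n\times a}$ and $W\in\mathbb{R}^{a\times b}$, and $\Phi=ZW$. Let $\Sigma_Z=\frac1n Z^\top Z$ and let $W=QS$ be the right polar decomposition of $W$, where $Q\in\mathbb{R}^{a\times b}$ has orthonormal columns and $S=(W^\top W)^{1/2}$. Let $\eta_1\ge\cdots\ge\eta_d>0$ be the positive eigenvalues of $Q^\top\Sigma_Z Q$, with $d=\operatorname{rank}(Q^\top\Sigma_ZQ)\ge 1$, and for $\delta\in[0,1]$ let $\mathrm{srank}_\delta(\Phi)=\min\{k:\ \sum_{i=1}^k\sigma_i(\Phi)/\sum_{i=1}^d\sigma_i(\Phi)\ge 1-\delta\}$, where $\sigma_1(\Phi)\ge\cdots\ge\sigma_d(\Phi)$ are the nonzero singular values of $\Phi$. If $\varepsilon=\sqrt{\mathrm{DfI}(W)}<1$, then \[ \mathrm{srank}_\delta(\Phi)\ge\left\lceil\frac{(1-\delta)d}{\delta\sqrt{\frac{1+\varepsilon}{1-\varepsilon}}\sqrt{\frac{\eta_1}{\eta_d}}+(1-\delta)}\right\rceil . \] If additionally $\Sigma_Z=I$, then \[ \mathrm{srank}_\delta(\Phi)\ge\left\lceil\frac{(1-\delta)d}{\delta\sqrt{\frac{1+\varepsilon}{1-\varepsilon}}+(1-\delta)}\right\rceil . \]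
   Context: $\mathrm{DfI}(W)=\|W^\top W-I\|_F^2$ (Deviation from Isometry), with $\|\cdot\|_F$ the Frobenius norm. $\lceil\cdot\rceil$ is the ceiling function. *)

theory Defs
  imports "Jordan_Normal_Form.Jordan_Normal_Form" "Jordan_Normal_Form.DL_Rank"
begin

definition DfI :: "real mat \<Rightarrow> real" where
  "DfI W = (let M = transpose_mat W * W - 1\<^sub>m (dim_col W) in
     (\<Sum>i<dim_row M. \<Sum>j<dim_col M. (M $$ (i,j))^2))"

definition psd_mat :: "real mat \<Rightarrow> bool" where
  "psd_mat S = (transpose_mat S = S \<and>
     (\<forall>v \<in> carrier_vec (dim_row S). v \<bullet> (S *\<^sub>v v) \<ge> 0))"

text \<open>Nonzero singular values of a real matrix, in decreasing order, counted with
  multiplicity: their squares are the nonzero eigenvalues (with algebraic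
  multiplicity) of Phi^T Phi.\<close>
definition nz_singular_values :: "real mat \<Rightarrow> real list" where
  "nz_singular_values P = (THE s. sorted_wrt (\<ge>) s \<and> (\<forall>x \<in> set s. x > 0) \<and>
     char_poly (transpose_mat P * P) =
       monom 1 (dim_col P - length s) * (\<Prod>x\<leftarrow>s. [:-(x^2), 1:]))"

definition srank :: "real \<Rightarrow> real mat \<Rightarrow> nat" where
  "srank \<delta> P = (let \<sigma> = nz_singular_values P in
     (LEAST k. sum_list (take k \<sigma>) / sum_list \<sigma> \<ge> 1 - \<delta>))"

end

theory Submission
  imports Defs
begin

lemma sym_quad_real:
  fixes A :: "real mat" and v :: "complex vec"
  assumes A: "A \<in> carrier_mat n n" and sym: "transpose_mat A = A" and v: "v \<in> carrier_vec n"
  shows "cnj (\<Sum>i<n. cnj (v$i) * (map_mat complex_of_real A *\<^sub>v v) $ i)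
       = (\<Sum>i<n. cnj (v$i) * (map_mat complex_of_real A *\<^sub>v v) $ i)"
proof -
  have sy: "A $$ (j,i) = A $$ (i,j)" if "i < n" "j < n" for i j
    using sym that A by (metis carrier_matD index_transpose_mat(1))
  have e: "(map_mat complex_of_real A *\<^sub>v v) $ i = (\<Sum>j<n. of_real (A$$(i,j)) * v$j)" if "i<n" for i
    using A v that by (auto simp: scalar_prod_def lessThan_atLeast0 intro!: sum.cong)
  have "(\<Sum>i<n. cnj (v$i) * (map_mat complex_of_real A *\<^sub>v v) $ i)
       = (\<Sum>i<n. \<Sum>j<n. cnj (v$i) * of_real (A$$(i,j)) * v$j)"
    by (simp add: e sum_distrib_left mult.assoc)
  moreover have "cnj (\<Sum>i<n. \<Sum>j<n. cnj (v$i) * of_real (A$$(i,j)) * v$j)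
       = (\<Sum>i<n. \<Sum>j<n. v$i * of_real (A$$(i,j)) * cnj (v$j))"
    by (simp add: cnj_sum)
  moreover have "\<dots> = (\<Sum>j<n. \<Sum>i<n. v$i * of_real (A$$(i,j)) * cnj (v$j))"
    by (rule sum.swap)
  moreover have "\<dots> = (\<Sum>j<n. \<Sum>i<n. cnj (v$j) * of_real (A$$(j,i)) * v$i)"
    by (intro sum.cong refl) (simp add: sy mult.commute mult.left_commute)
  ultimately show ?thesis by simp
qed

lemma real_eigvec:
  fixes A :: "real mat"
  assumes A: "A \<in> carrier_mat n n" and sym: "transpose_mat A = A" and n: "n > 0"
  shows "\<exists>l v. v \<in> carrier_vec n \<and> v \<bullet> v = 1 \<and> A *\<^sub>v v = l \<cdot>\<^sub>v v"
proof -
  let ?Ac = "map_mat complex_of_real A"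
  have Ac: "?Ac \<in> carrier_mat n n" using A by auto
  obtain as where cp: "char_poly ?Ac = (\<Prod>a\<leftarrow>as. [:- a, 1:])" and las: "length as = n"
    using char_poly_factorized[OF Ac] by blast
  define c where "c = as ! 0"
  have "poly (char_poly ?Ac) c = 0"
    unfolding cp c_def using las n by (auto simp: poly_prod_list prod_list_zero_iff)
  then have "eigenvalue ?Ac c" using eigenvalue_root_char_poly[OF Ac] by simp
  then obtain v where v: "v \<in> carrier_vec n" "v \<noteq> 0\<^sub>v n" "?Ac *\<^sub>v v = c \<cdot>\<^sub>v v"
    unfolding eigenvalue_def eigenvector_def using A by auto
  define N where "N = (\<Sum>i<n. cnj (v$i) * v$i)"
  have s: "(\<Sum>i<n. cnj (v$i) * (?Ac *\<^sub>v v) $ i) = c * N"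
    unfolding N_def v(3) using v(1) by (simp add: sum_distrib_left mult.left_commute)
  have Nr: "N = of_real (\<Sum>i<n. (cmod (v$i))^2)"
  proof -
    have "cnj (v$i) * v$i = of_real ((cmod (v$i))^2)" for i
      by (simp only: complex_norm_square mult.commute)
    thus ?thesis unfolding N_def of_real_sum by simp
  qed
  obtain i where i: "i < n" "v $ i \<noteq> 0" using v(1,2) by (metis carrier_vecD eq_vecI index_zero_vec(1) index_zero_vec(2))
  have "(\<Sum>i<n. (cmod (v$i))^2) > 0"
    by (rule sum_pos2[of _ i]) (use i in auto)
  hence N0: "N \<noteq> 0" unfolding Nr by (metis less_irrefl of_real_eq_0_iff)
  have "cnj (c * N) = c * N" using sym_quad_real[OF A sym v(1)] s by simp
  hence "cnj c * N = c * N" unfolding Nr by simp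
  hence cc: "cnj c = c" using N0 by simp
  have "Im c = 0" using arg_cong[OF cc, of Im] by simp
  hence creal: "c = of_real (Re c)" by (simp add: complex_eq_iff)
  have "poly (map_poly of_real (char_poly A)) (of_real (Re c)) = (0::complex)"
    using \<open>poly (char_poly ?Ac) c = 0\<close> creal of_real_hom.char_poly_hom[OF A] by metis
  hence "poly (char_poly A) (Re c) = 0" by (simp add: of_real_hom.poly_map_poly)
  hence "eigenvalue A (Re c)" using eigenvalue_root_char_poly[OF A] by simp
  then obtain w where w: "w \<in> carrier_vec n" "w \<noteq> 0\<^sub>v n" "A *\<^sub>v w = Re c \<cdot>\<^sub>v w"
    unfolding eigenvalue_def eigenvector_def using A by auto
  obtain j where j: "j < n" "w $ j \<noteq> 0" using w(1,2) by (metis carrier_vecD eq_vecI index_zero_vec(1) index_zero_vec(2))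
  have ww: "w \<bullet> w > 0" unfolding scalar_prod_def using w(1) j
    by (intro sum_pos2[of _ j]) (auto simp: zero_less_mult_iff)
  define u where "u = (1 / sqrt (w \<bullet> w)) \<cdot>\<^sub>v w"
  have u: "u \<in> carrier_vec n" unfolding u_def using w by auto
  have "u \<bullet> u = (1 / sqrt (w \<bullet> w))^2 * (w \<bullet> w)" unfolding u_def using w(1)
    by (simp add: power2_eq_square)
  also have "\<dots> = 1" using ww by (simp add: power_divide)
  finally have uu: "u \<bullet> u = 1" .
  have "A *\<^sub>v u = Re c \<cdot>\<^sub>v u" unfolding u_def using A w by (simp add: mult_mat_vec smult_smult_assoc mult.commute)
  thus ?thesis using u uu by blast
qed

lemma householder:
  fixes v :: "real vec"
  assumes v: "v \<in> carrier_vec n" "v \<bullet> v = 1" and n: "n > 0"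
  shows "\<exists>H \<in> carrier_mat n n. transpose_mat H = H \<and> H * H = 1\<^sub>m n \<and> H *\<^sub>v unit_vec n 0 = v"
proof (cases "v = unit_vec n 0")
  case True
  thus ?thesis by (intro bexI[of _ "1\<^sub>m n"]) auto
next
  case False
  define e where "e = (unit_vec n 0 :: real vec)"
  have e: "e \<in> carrier_vec n" unfolding e_def by simp
  define w where "w = v - e"
  have w: "w \<in> carrier_vec n" unfolding w_def using v e by simp
  have wi: "w $ i = v $ i - e $ i" if "i < n" for i unfolding w_def using v e that by simp
  have "\<exists>j<n. w $ j \<noteq> 0"
  proof (rule ccontr)
    assume "\<not> ?thesis"
    hence "v = e" using v e wi by (intro eq_vecI) auto
    thus False using False e_def by simp
  qed
  then obtain j where j: "j < n" "w $ j \<noteq> 0" by blast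
  define ww where "ww = w \<bullet> w"
  have wwpos: "ww > 0" unfolding ww_def scalar_prod_def using w j
    by (intro sum_pos2[of _ j]) (auto simp: zero_less_mult_iff)
  have ve: "v \<bullet> e = v $ 0" "e \<bullet> v = v $ 0" "e \<bullet> e = 1" unfolding e_def using v n by auto
  have wwv: "ww = 2 - 2 * v $ 0"
  proof -
    have "ww = v \<bullet> (v - e) - e \<bullet> (v - e)" unfolding ww_def w_def
      by (rule minus_scalar_prod_distrib[OF v(1) e]) (use v e in simp)
    also have "\<dots> = v \<bullet> v - v \<bullet> e - (e \<bullet> v - e \<bullet> e)"
      by (simp only: scalar_prod_minus_distrib[OF v(1) v(1) e] scalar_prod_minus_distrib[OF e v(1) e])
    finally have "ww = v \<bullet> v - v \<bullet> e - (e \<bullet> v - e \<bullet> e)" .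
    thus ?thesis using ve v by simp
  qed
  have w0: "w $ 0 = v $ 0 - 1" unfolding w_def e_def using v n by simp
  define c where "c = 2 / ww"
  have cw0: "c * w $ 0 = -1" unfolding c_def w0 using wwpos wwv by (simp add: field_simps)
  have c2: "c * c * ww = 2 * c" unfolding c_def using wwpos by (simp add: field_simps)
  define H where "H = mat n n (\<lambda>(i,j). (if i = j then 1 else 0) - c * w$i * w$j)"
  have H: "H \<in> carrier_mat n n" unfolding H_def by simp
  have Ht: "transpose_mat H = H" unfolding H_def by (rule eq_matI) auto
  have HH: "H * H = 1\<^sub>m n"
  proof (rule eq_matI)
    fix i j assume ij: "i < dim_row (1\<^sub>m n :: real mat)" "j < dim_col (1\<^sub>m n :: real mat)"
    hence i: "i < n" and j: "j < n" by auto
    have "(H * H) $$ (i,j) = (\<Sum>k\<in>{0..<n}. H $$ (i,k) * H $$ (k,j))"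
      using H i j by (simp add: scalar_prod_def)
    also have "\<dots> = (\<Sum>k\<in>{0..<n}. (if i = k then ((if k = j then 1 else 0) - c * w$k * w$j) else 0)
         - (if k = j then c * w$i * w$k else 0) + c * c * w$i * w$j * (w$k * w$k))"
      unfolding H_def using i j by (intro sum.cong refl) (auto simp: algebra_simps)
    also have "\<dots> = ((if i = j then 1 else 0) - c * w$i * w$j) - c * w$i * w$j + c * c * w$i * w$j * ww"
      unfolding ww_def scalar_prod_def using i j w
      by (simp add: sum.distrib sum_subtractf sum_distrib_left[symmetric])
    also have "\<dots> = (if i = j then 1 else 0)"
    proof -
      have "c * c * w$i * w$j * ww = (c * c * ww) * (w$i * w$j)" by (simp add: algebra_simps)
      thus ?thesis unfolding c2 by simp
    qed
    also have "\<dots> = 1\<^sub>m n $$ (i,j)" using i j by simp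
    finally show "(H * H) $$ (i,j) = 1\<^sub>m n $$ (i,j)" .
  qed (use H in auto)
  have He: "H *\<^sub>v unit_vec n 0 = v"
  proof (rule eq_vecI)
    fix i assume "i < dim_vec v"
    hence i: "i < n" using v by simp
    have "(H *\<^sub>v unit_vec n 0) $ i = H $$ (i,0)" using H i n by simp
    also have "\<dots> = (if i = 0 then 1 else 0) - (c * w $ 0) * w $ i" unfolding H_def using i n by simp
    also have "\<dots> = v $ i" unfolding cw0 using i v unfolding w_def e_def by auto
    finally show "(H *\<^sub>v unit_vec n 0) $ i = v $ i" .
  qed (use H v in auto)
  show ?thesis using H Ht HH He by blast
qed

lemma spectral:
  fixes A :: "real mat"
  assumes "A \<in> carrier_mat n n" "transpose_mat A = A"
  shows "\<exists>U D. U \<in> carrier_mat n n \<and> D \<in> carrier_mat n n \<and> transpose_mat U * U = 1\<^sub>m n \<and>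
     U * transpose_mat U = 1\<^sub>m n \<and> diagonal_mat D \<and> A = U * D * transpose_mat U"
  using assms
proof (induction n arbitrary: A)
  case 0
  have "A = 1\<^sub>m 0 * A * transpose_mat (1\<^sub>m 0)" using 0 by (intro eq_matI) auto
  moreover have "diagonal_mat A" using 0 unfolding diagonal_mat_def by auto
  ultimately show ?case using 0 by (intro exI[of _ "1\<^sub>m 0"] exI[of _ A]) auto
next
  case (Suc m)
  note A = Suc.prems(1) and sym = Suc.prems(2)
  obtain l v where v: "v \<in> carrier_vec (Suc m)" "v \<bullet> v = 1" "A *\<^sub>v v = l \<cdot>\<^sub>v v"
    using real_eigvec[OF A sym] by auto
  obtain H where H: "H \<in> carrier_mat (Suc m) (Suc m)" "transpose_mat H = H" "H * H = 1\<^sub>m (Suc m)"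
    "H *\<^sub>v unit_vec (Suc m) 0 = v"
    using householder[OF v(1,2)] by auto
  define B where "B = H * A * H"
  have B: "B \<in> carrier_mat (Suc m) (Suc m)" unfolding B_def using H A by auto
  have Bt: "transpose_mat B = B"
  proof -
    have HA: "H * A \<in> carrier_mat (Suc m) (Suc m)" using H A by auto
    have "transpose_mat B = transpose_mat H * transpose_mat (H * A)"
      unfolding B_def by (rule transpose_mult[OF HA H(1)])
    also have "transpose_mat (H * A) = transpose_mat A * transpose_mat H"
      by (rule transpose_mult[OF H(1) A])
    finally show ?thesis unfolding B_def using H A sym by simp
  qed
  have Hv: "H *\<^sub>v v = unit_vec (Suc m) 0"
    using H by (metis H(4) assoc_mult_mat_vec one_mult_mat_vec unit_vec_carrier)
  have Be: "B *\<^sub>v unit_vec (Suc m) 0 = l \<cdot>\<^sub>v unit_vec (Suc m) 0"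
  proof -
    have "B *\<^sub>v unit_vec (Suc m) 0 = H *\<^sub>v (A *\<^sub>v (H *\<^sub>v unit_vec (Suc m) 0))"
    proof -
      have HA: "H * A \<in> carrier_mat (Suc m) (Suc m)" using H A by auto
      have e: "unit_vec (Suc m) 0 \<in> carrier_vec (Suc m)" by simp
      have Hev: "H *\<^sub>v unit_vec (Suc m) 0 \<in> carrier_vec (Suc m)" using H(1) by (metis mult_mat_vec_carrier e)
      show ?thesis unfolding B_def
        by (simp only: assoc_mult_mat_vec[OF HA H(1) e] assoc_mult_mat_vec[OF H(1) A Hev])
    qed
    also have "\<dots> = H *\<^sub>v (l \<cdot>\<^sub>v v)" using H(4) v(3) by simp
    also have "\<dots> = l \<cdot>\<^sub>v (H *\<^sub>v v)" using H v by (simp add: mult_mat_vec)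
    finally show ?thesis using Hv by simp
  qed
  have Bcol: "B $$ (i,0) = (if i = 0 then l else 0)" if "i < Suc m" for i
  proof -
    have "B $$ (i,0) = (B *\<^sub>v unit_vec (Suc m) 0) $ i" using B that by simp
    thus ?thesis unfolding Be using that by simp
  qed
  have Brow: "B $$ (0,j) = (if j = 0 then l else 0)" if "j < Suc m" for j
    using Bcol[OF that] Bt B that by (metis carrier_matD index_transpose_mat(1) zero_less_Suc)
  obtain B1 B2 B3 B4 where sb: "split_block B 1 1 = (B1,B2,B3,B4)" by (metis prod_cases4)
  have dB: "dim_row B = 1 + m" "dim_col B = 1 + m" using B by auto
  note spl = split_block[OF sb dB]
  have B2: "B2 = 0\<^sub>m 1 m"
  proof (rule eq_matI)
    fix i j assume "i < dim_row (0\<^sub>m 1 m :: real mat)" "j < dim_col (0\<^sub>m 1 m :: real mat)"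
    hence ij: "i = 0" "j < m" by auto
    have "B2 $$ (i,j) = B $$ (0, j + 1)" using sb ij B unfolding split_block_def by auto
    thus "B2 $$ (i,j) = 0\<^sub>m 1 m $$ (i,j)" using Brow[of "j+1"] ij by simp
  qed (use spl in auto)
  have B3: "B3 = 0\<^sub>m m 1"
  proof (rule eq_matI)
    fix i j assume "i < dim_row (0\<^sub>m m 1 :: real mat)" "j < dim_col (0\<^sub>m m 1 :: real mat)"
    hence ij: "j = 0" "i < m" by auto
    have "B3 $$ (i,j) = B $$ (i + 1, 0)" using sb ij B unfolding split_block_def by auto
    thus "B3 $$ (i,j) = 0\<^sub>m m 1 $$ (i,j)" using Bcol[of "i+1"] ij by simp
  qed (use spl in auto)
  have B4sym: "transpose_mat B4 = B4"
  proof (rule eq_matI)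
    fix i j assume "i < dim_row B4" "j < dim_col B4"
    hence ij: "i < m" "j < m" using spl by auto
    have "B4 $$ (i,j) = B $$ (i + 1, j + 1)" "B4 $$ (j,i) = B $$ (j + 1, i + 1)"
      using sb ij B unfolding split_block_def by auto
    moreover have "B $$ (j + 1, i + 1) = B $$ (i + 1, j + 1)" using Bt B ij
      by (metis Suc_eq_plus1 Suc_mono carrier_matD index_transpose_mat(1))
    ultimately show "transpose_mat B4 $$ (i,j) = B4 $$ (i,j)" using ij spl by simp
  qed (use spl in auto)
  obtain U4 D4 where U4: "U4 \<in> carrier_mat m m" "D4 \<in> carrier_mat m m"
    "transpose_mat U4 * U4 = 1\<^sub>m m" "U4 * transpose_mat U4 = 1\<^sub>m m" "diagonal_mat D4"
    "B4 = U4 * D4 * transpose_mat U4"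
    using Suc.IH[OF spl(4) B4sym] by blast
  define F where "F = four_block_mat (1\<^sub>m 1) (0\<^sub>m 1 m) (0\<^sub>m m 1) U4"
  define Dm where "Dm = four_block_mat B1 (0\<^sub>m 1 m) (0\<^sub>m m 1) D4"
  have F: "F \<in> carrier_mat (Suc m) (Suc m)" unfolding F_def using U4 by auto
  have Dm: "Dm \<in> carrier_mat (Suc m) (Suc m)" unfolding Dm_def using U4 spl by auto
  have Ft: "transpose_mat F = four_block_mat (1\<^sub>m 1) (0\<^sub>m 1 m) (0\<^sub>m m 1) (transpose_mat U4)"
    unfolding F_def using U4 by (subst transpose_four_block_mat) auto
  have o1: "(1\<^sub>m 1 :: real mat) \<in> carrier_mat 1 1" and z1: "(0\<^sub>m 1 m :: real mat) \<in> carrier_mat 1 m"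
    and z2: "(0\<^sub>m m 1 :: real mat) \<in> carrier_mat m 1" by auto
  have U4t: "transpose_mat U4 \<in> carrier_mat m m" using U4 by auto
  have D4: "D4 \<in> carrier_mat m m" using U4 by auto
  have UD4: "U4 * D4 \<in> carrier_mat m m" using U4 by auto
  have FtF: "transpose_mat F * F = 1\<^sub>m (Suc m)"
    unfolding Ft unfolding F_def using U4
    by (subst mult_four_block_mat[OF o1 z1 z2 U4t o1 z1 z2 U4(1)]) auto
  have FFt: "F * transpose_mat F = 1\<^sub>m (Suc m)"
    unfolding Ft unfolding F_def using U4
    by (subst mult_four_block_mat[OF o1 z1 z2 U4(1) o1 z1 z2 U4t]) auto
  have FDF: "F * Dm * transpose_mat F = B"
  proof -
    have FD: "F * Dm = four_block_mat B1 (0\<^sub>m 1 m) (0\<^sub>m m 1) (U4 * D4)"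
      unfolding F_def Dm_def using U4 spl
      by (subst mult_four_block_mat[OF o1 z1 z2 U4(1) spl(1) z1 z2 D4]) auto
    have "F * Dm * transpose_mat F = four_block_mat B1 (0\<^sub>m 1 m) (0\<^sub>m m 1) (U4 * D4 * transpose_mat U4)"
      unfolding Ft FD using U4 spl
      by (subst mult_four_block_mat[OF spl(1) z1 z2 UD4 o1 z1 z2 U4t]) auto
    thus ?thesis using spl(5) B2 B3 U4(6) by simp
  qed
  have Dmd: "diagonal_mat Dm"
    unfolding diagonal_mat_def
  proof (intro allI impI)
    fix i j assume ij: "i < dim_row Dm" "j < dim_col Dm" "i \<noteq> j"
    show "Dm $$ (i,j) = 0"
    proof (cases "i = 0 \<or> j = 0")
      case True thus ?thesis using ij spl U4 unfolding Dm_def by auto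
    next
      case False
      hence "Dm $$ (i,j) = D4 $$ (i - 1, j - 1)" using ij spl U4 unfolding Dm_def by auto
      thus ?thesis using U4(5) ij False spl U4 Dm unfolding diagonal_mat_def by auto
    qed
  qed
  define U where "U = H * F"
  have U: "U \<in> carrier_mat (Suc m) (Suc m)" unfolding U_def using H F by auto
  have Ut: "transpose_mat U = transpose_mat F * H" unfolding U_def using H F
    by (simp add: transpose_mult[of _ "Suc m" "Suc m"])
  have Ftc: "transpose_mat F \<in> carrier_mat (Suc m) (Suc m)" using F by auto
  have HF: "H * F \<in> carrier_mat (Suc m) (Suc m)" using H F by auto
  have "transpose_mat U * U = (transpose_mat F * H) * (H * F)" unfolding Ut by (simp add: U_def)
  also have "\<dots> = transpose_mat F * ((H * H) * F)"
    by (simp only: assoc_mult_mat[OF Ftc H(1) HF] assoc_mult_mat[OF H(1) H(1) F])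
  finally have UtU: "transpose_mat U * U = 1\<^sub>m (Suc m)" using H F FtF by simp
  have FFtH: "F * transpose_mat F * H \<in> carrier_mat (Suc m) (Suc m)" using F H by auto
  have "U * transpose_mat U = (H * F) * (transpose_mat F * H)" unfolding Ut by (simp add: U_def)
  also have "\<dots> = H * ((F * transpose_mat F) * H)"
  proof -
    have FtH: "transpose_mat F * H \<in> carrier_mat (Suc m) (Suc m)" using F H by auto
    show ?thesis
      by (simp only: assoc_mult_mat[OF H(1) F FtH] assoc_mult_mat[OF F Ftc H(1), symmetric])
  qed
  finally have UUt: "U * transpose_mat U = 1\<^sub>m (Suc m)" using H F FFt by simp
  have FDFc: "F * Dm * transpose_mat F \<in> carrier_mat (Suc m) (Suc m)" using F Dm by auto
  have "U * Dm * transpose_mat U = ((H * F) * Dm) * (transpose_mat F * H)" unfolding Ut by (simp add: U_def)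
  also have "\<dots> = H * (F * Dm * transpose_mat F) * H"
    using H F Dm Ftc by (simp add: assoc_mult_mat[of _ "Suc m" "Suc m" _ "Suc m" _ "Suc m"])
  also have "\<dots> = A"
  proof -
    have hHH: "H * (H * X) = X" if X: "X \<in> carrier_mat (Suc m) k" for X k
      using assoc_mult_mat[OF H(1) H(1) X, symmetric] H X by simp
    have "H * (H * A * H) * H = H * (H * (A * (H * H)))"
      using H A by (simp add: assoc_mult_mat[of _ "Suc m" "Suc m" _ "Suc m" _ "Suc m"])
    also have "\<dots> = A" using H A hHH[OF A] by simp
    finally show ?thesis unfolding FDF B_def .
  qed
  finally show ?case using U Dm UtU UUt Dmd by metis
qed

lemma sum_prod_le_aux:
  fixes a b :: "'i \<Rightarrow> real"
  assumes "finite I"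
  shows "(\<Sum>k\<in>I. a k * b k) \<le> sqrt (\<Sum>k\<in>I. (a k)^2) * sqrt (\<Sum>k\<in>I. (b k)^2)"
proof -
  define A where "A = (\<Sum>k\<in>I. (a k)^2)"
  define B where "B = (\<Sum>k\<in>I. (b k)^2)"
  have A0: "A \<ge> 0" and B0: "B \<ge> 0" unfolding A_def B_def by (auto intro: sum_nonneg)
  show ?thesis
  proof (cases "A = 0 \<or> B = 0")
    case True
    hence "(\<forall>k\<in>I. a k = 0) \<or> (\<forall>k\<in>I. b k = 0)"
      unfolding A_def B_def using assms by (auto simp: sum_nonneg_eq_0_iff)
    hence "(\<Sum>k\<in>I. a k * b k) = 0" by auto
    thus ?thesis using A0 B0 unfolding A_def B_def by simp
  next
    case False
    hence Ap: "sqrt A > 0" and Bp: "sqrt B > 0" using A0 B0 by auto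
    define t where "t = sqrt B / sqrt A"
    have tp: "t > 0" unfolding t_def using Ap Bp by simp
    have "2 * (a k * b k) \<le> t * (a k)^2 + (b k)^2 / t" for k
    proof -
      have "0 \<le> (t * a k - b k)^2" by simp
      hence "2 * t * (a k * b k) \<le> t * (t * (a k)^2) + (b k)^2" by (simp add: power2_eq_square algebra_simps)
      hence "2 * (a k * b k) * t \<le> (t * (a k)^2 + (b k)^2 / t) * t" using tp by (simp add: algebra_simps power2_eq_square)
      thus ?thesis using tp by simp
    qed
    hence "(\<Sum>k\<in>I. 2 * (a k * b k)) \<le> (\<Sum>k\<in>I. t * (a k)^2 + (b k)^2 / t)" by (rule sum_mono)
    also have "\<dots> = t * A + B / t" unfolding A_def B_def by (simp add: sum.distrib sum_distrib_left sum_divide_distrib)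
    also have "\<dots> = 2 * (sqrt A * sqrt B)" unfolding t_def using Ap Bp A0 B0
      by (simp add: field_simps)
    finally show ?thesis unfolding A_def B_def by (simp add: sum_distrib_left[symmetric])
  qed
qed

lemma abs_sum_prod_le:
  fixes a b :: "'i \<Rightarrow> real"
  assumes "finite I"
  shows "\<bar>\<Sum>k\<in>I. a k * b k\<bar> \<le> sqrt (\<Sum>k\<in>I. (a k)^2) * sqrt (\<Sum>k\<in>I. (b k)^2)"
proof -
  have "(\<Sum>k\<in>I. (- a k) * b k) \<le> sqrt (\<Sum>k\<in>I. (- a k)^2) * sqrt (\<Sum>k\<in>I. (b k)^2)"
    by (rule sum_prod_le_aux[OF assms])
  hence "- (\<Sum>k\<in>I. a k * b k) \<le> sqrt (\<Sum>k\<in>I. (a k)^2) * sqrt (\<Sum>k\<in>I. (b k)^2)"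
    by (simp add: sum_negf)
  thus ?thesis using sum_prod_le_aux[OF assms, of a b] by linarith
qed

lemma quad_frob:
  fixes G :: "real mat" and x :: "real vec"
  assumes G: "G \<in> carrier_mat m m" and x: "x \<in> carrier_vec m"
  shows "\<bar>x \<bullet> (G *\<^sub>v x)\<bar> \<le> sqrt (\<Sum>i<m. \<Sum>j<m. (G $$ (i,j))^2) * (x \<bullet> x)"
proof -
  have "x \<bullet> (G *\<^sub>v x) = (\<Sum>i<m. x $ i * (\<Sum>j<m. G $$ (i,j) * x $ j))"
    using G x by (simp add: scalar_prod_def lessThan_atLeast0)
  also have "\<dots> = (\<Sum>i<m. \<Sum>j<m. G $$ (i,j) * (x $ i * x $ j))"
    by (simp add: sum_distrib_left algebra_simps)
  also have "\<dots> = (\<Sum>p\<in>{..<m} \<times> {..<m}. G $$ p * (x $ fst p * x $ snd p))"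
    by (subst sum.cartesian_product) (simp add: split_def)
  finally have e1: "x \<bullet> (G *\<^sub>v x) = (\<Sum>p\<in>{..<m} \<times> {..<m}. G $$ p * (x $ fst p * x $ snd p))" .
  have e2: "(\<Sum>p\<in>{..<m} \<times> {..<m}. (G $$ p)^2) = (\<Sum>i<m. \<Sum>j<m. (G $$ (i,j))^2)"
    by (subst sum.cartesian_product) (simp add: split_def)
  have "(\<Sum>p\<in>{..<m} \<times> {..<m}. (x $ fst p * x $ snd p)^2) = (\<Sum>i<m. \<Sum>j<m. (x$i)^2 * (x$j)^2)"
    by (subst sum.cartesian_product) (simp add: split_def power_mult_distrib)
  also have "\<dots> = (\<Sum>i<m. (x$i)^2) * (\<Sum>j<m. (x$j)^2)" by (simp add: sum_product)
  also have "\<dots> = (x \<bullet> x)^2"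
    using x by (simp add: scalar_prod_def lessThan_atLeast0 power2_eq_square)
  finally have e3: "(\<Sum>p\<in>{..<m} \<times> {..<m}. (x $ fst p * x $ snd p)^2) = (x \<bullet> x)^2" .
  have xx: "x \<bullet> x \<ge> 0" using x by (simp add: scalar_prod_def sum_nonneg)
  show ?thesis unfolding e1
    using abs_sum_prod_le[of "{..<m} \<times> {..<m}" "\<lambda>p. G $$ p" "\<lambda>p. x $ fst p * x $ snd p"]
    unfolding e2 e3 using xx by simp
qed

lemma diag_mult_vec:
  fixes D :: "'a :: comm_ring_1 mat"
  assumes D: "D \<in> carrier_mat n n" "diagonal_mat D" and z: "z \<in> carrier_vec n" and i: "i < n"
  shows "(D *\<^sub>v z) $ i = D $$ (i,i) * z $ i"
proof -
  have "(D *\<^sub>v z) $ i = (\<Sum>j\<in>{0..<n}. D $$ (i,j) * z $ j)"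
    using D z i by (simp add: scalar_prod_def)
  also have "\<dots> = (\<Sum>j\<in>{0..<n}. if j = i then D $$ (i,i) * z $ i else 0)"
    using D i unfolding diagonal_mat_def by (intro sum.cong) auto
  also have "\<dots> = D $$ (i,i) * z $ i" using i by simp
  finally show ?thesis .
qed

lemma norm_mult:
  fixes A :: "real mat"
  assumes A: "A \<in> carrier_mat nr nc" and x: "x \<in> carrier_vec nc"
  shows "(A *\<^sub>v x) \<bullet> (A *\<^sub>v x) = x \<bullet> ((transpose_mat A * A) *\<^sub>v x)"
proof -
  have Ax: "A *\<^sub>v x \<in> carrier_vec nr" using A x by simp
  have "(transpose_mat A *\<^sub>v (A *\<^sub>v x)) \<bullet> x = (A *\<^sub>v x) \<bullet> (A *\<^sub>v x)"
    by (rule transpose_vec_mult_scalar[OF A x Ax])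
  moreover have "(transpose_mat A * A) *\<^sub>v x = transpose_mat A *\<^sub>v (A *\<^sub>v x)"
    using A x by (simp add: assoc_mult_mat_vec[of _ nc nr])
  moreover have "(transpose_mat A *\<^sub>v (A *\<^sub>v x)) \<bullet> x = x \<bullet> (transpose_mat A *\<^sub>v (A *\<^sub>v x))"
    using A x by (intro comm_scalar_prod[of _ nc]) auto
  ultimately show ?thesis by simp
qed

lemma orth_quad:
  fixes U D A :: "real mat"
  assumes U: "U \<in> carrier_mat n n" and D: "D \<in> carrier_mat n n" and UtU: "transpose_mat U * U = 1\<^sub>m n"
    and UUt: "U * transpose_mat U = 1\<^sub>m n"
    and Dd: "diagonal_mat D" and A: "A = U * D * transpose_mat U" and y: "y \<in> carrier_vec n"
  shows "y \<bullet> (A *\<^sub>v y) = (\<Sum>i<n. D $$ (i,i) * ((transpose_mat U *\<^sub>v y) $ i)^2)"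
    and "(A *\<^sub>v y) \<bullet> (A *\<^sub>v y) = (\<Sum>i<n. (D $$ (i,i))^2 * ((transpose_mat U *\<^sub>v y) $ i)^2)"
    and "y \<bullet> y = (\<Sum>i<n. ((transpose_mat U *\<^sub>v y) $ i)^2)"
proof -
  define z where "z = transpose_mat U *\<^sub>v y"
  have Ut: "transpose_mat U \<in> carrier_mat n n" using U by simp
  have z: "z \<in> carrier_vec n" unfolding z_def using U y by simp
  have Dz: "D *\<^sub>v z \<in> carrier_vec n" using D z by simp
  have UD: "U * D \<in> carrier_mat n n" using U D by simp
  have Ay: "A *\<^sub>v y = U *\<^sub>v (D *\<^sub>v z)" unfolding A z_def
    by (simp only: assoc_mult_mat_vec[OF UD Ut y] assoc_mult_mat_vec[OF U D z[unfolded z_def]])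
  have Dzi: "(D *\<^sub>v z) $ i = D $$ (i,i) * z $ i" if "i < n" for i
    by (rule diag_mult_vec[OF D Dd z that])
  have "y \<bullet> (A *\<^sub>v y) = z \<bullet> (D *\<^sub>v z)" unfolding Ay
    using transpose_vec_mult_scalar[OF U Dz y] by (simp add: z_def)
  also have "\<dots> = (\<Sum>i\<in>{0..<n}. z $ i * (D *\<^sub>v z) $ i)"
    unfolding scalar_prod_def using Dz D by simp
  also have "\<dots> = (\<Sum>i<n. D $$ (i,i) * (z $ i)^2)"
    unfolding lessThan_atLeast0 by (rule sum.cong) (auto simp: Dzi power2_eq_square)
  finally show "y \<bullet> (A *\<^sub>v y) = (\<Sum>i<n. D $$ (i,i) * ((transpose_mat U *\<^sub>v y) $ i)^2)"
    unfolding z_def .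
  have "(A *\<^sub>v y) \<bullet> (A *\<^sub>v y) = (D *\<^sub>v z) \<bullet> ((transpose_mat U * U) *\<^sub>v (D *\<^sub>v z))"
    unfolding Ay by (rule norm_mult[OF U Dz])
  also have "\<dots> = (D *\<^sub>v z) \<bullet> (D *\<^sub>v z)" unfolding UtU using Dz by simp
  also have "\<dots> = (\<Sum>i\<in>{0..<n}. (D *\<^sub>v z) $ i * (D *\<^sub>v z) $ i)"
    unfolding scalar_prod_def using Dz D by simp
  also have "\<dots> = (\<Sum>i<n. (D $$ (i,i))^2 * (z $ i)^2)"
    unfolding lessThan_atLeast0 by (rule sum.cong) (auto simp: Dzi power2_eq_square)
  finally show "(A *\<^sub>v y) \<bullet> (A *\<^sub>v y) = (\<Sum>i<n. (D $$ (i,i))^2 * ((transpose_mat U *\<^sub>v y) $ i)^2)"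
    unfolding z_def .
  have "z \<bullet> z = y \<bullet> ((transpose_mat (transpose_mat U) * transpose_mat U) *\<^sub>v y)"
    unfolding z_def by (rule norm_mult[OF Ut y])
  also have "\<dots> = y \<bullet> y" using UUt y by simp
  finally show "y \<bullet> y = (\<Sum>i<n. ((transpose_mat U *\<^sub>v y) $ i)^2)"
    using z by (simp add: z_def[symmetric] scalar_prod_def lessThan_atLeast0 power2_eq_square)
qed

lemma rank_sum_rank1:
  fixes f g :: "nat \<Rightarrow> nat \<Rightarrow> real"
  assumes "finite I"
  shows "vec_space.rank m (mat m k (\<lambda>(j,l). \<Sum>i\<in>I. f i j * g i l)) \<le> card I"
  using assms
proof (induction I rule: finite_induct)
  case empty
  have z: "mat m k (\<lambda>(j,l). \<Sum>i\<in>{}. f i j * g i l) = (0\<^sub>m m k :: real mat)"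
    by (rule eq_matI) auto
  show ?case unfolding z by (simp add: vec_space.rank_0I)
next
  case (insert a I)
  have e: "mat m k (\<lambda>(j,l). \<Sum>i\<in>insert a I. f i j * g i l)
     = mat m k (\<lambda>(j,l). \<Sum>i\<in>I. f i j * g i l) + mat m k (\<lambda>(j,l). f a j * g a l)"
    using insert by (intro eq_matI) auto
  have "vec_space.rank m (mat m k (\<lambda>(j,l). \<Sum>i\<in>insert a I. f i j * g i l))
     \<le> vec_space.rank m (mat m k (\<lambda>(j,l). \<Sum>i\<in>I. f i j * g i l)) + vec_space.rank m (mat m k (\<lambda>(j,l). f a j * g a l))"
    unfolding e by (rule vec_space.rank_subadditive) auto
  moreover have "vec_space.rank m (mat m k (\<lambda>(j,l). f a j * g a l)) \<le> 1"
    by (rule vec_space.rank_le_1_product_entries[of _ m k "f a" "g a"]) auto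
  ultimately show ?case using insert by simp
qed

lemma order_prod_linear:
  fixes xs :: "real list"
  shows "Polynomial.order c (\<Prod>x\<leftarrow>xs. [:- x, 1:]) = count (mset xs) c"
proof (induction xs)
  case Nil thus ?case by (simp add: order_1_eq_0)
next
  case (Cons a xs)
  have nz: "(\<Prod>x\<leftarrow>xs. [:- x, 1:]) \<noteq> (0 :: real poly)" by (auto simp: prod_list_zero_iff)
  have lin: "[:- a, 1:] \<noteq> (0 :: real poly)" by simp
  have "[:- a, 1:] * (\<Prod>x\<leftarrow>xs. [:- x, 1:]) \<noteq> 0" by (metis mult_eq_0_iff nz lin)
  hence "Polynomial.order c ([:- a, 1:] * (\<Prod>x\<leftarrow>xs. [:- x, 1:]))
     = Polynomial.order c [:- a, 1:] + Polynomial.order c (\<Prod>x\<leftarrow>xs. [:- x, 1:])"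
    by (rule order_mult)
  thus ?case using Cons by (simp add: order_linear')
qed

lemma order_monom_nonzero:
  fixes c :: real
  assumes "c \<noteq> 0"
  shows "Polynomial.order c (monom 1 k) = 0"
  by (rule order_0I) (simp add: poly_monom assms)

lemma sv_unique:
  fixes s s' :: "real list"
  assumes s: "sorted_wrt (\<ge>) s" "\<forall>x\<in>set s. x > 0"
    and s': "sorted_wrt (\<ge>) s'" "\<forall>x\<in>set s'. x > 0"
    and eq: "monom 1 k * (\<Prod>x\<leftarrow>s. [:-(x^2), 1:]) = monom 1 k' * (\<Prod>x\<leftarrow>s'. [:-(x^2), 1:])"
  shows "s = s'"
proof -
  have pe: "(\<Prod>x\<leftarrow>t. [:-(x^2), 1:]) = (\<Prod>x\<leftarrow>map (\<lambda>x. x^2) t. [:- x, 1:])" for t :: "real list"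
    by (simp add: comp_def)
  have nz: "monom 1 j * (\<Prod>x\<leftarrow>map (\<lambda>x. x^2) t. [:- x, 1:]) \<noteq> (0 :: real poly)" for j t
    by (auto simp: prod_list_zero_iff monom_eq_0_iff)
  have ord: "Polynomial.order c (monom 1 j * (\<Prod>x\<leftarrow>map (\<lambda>x. x^2) t. [:- x, 1:]))
      = count (mset (map (\<lambda>x. x^2) t)) c" if "c \<noteq> 0" for c :: real and j t
  proof -
    have "Polynomial.order c (monom 1 j * (\<Prod>x\<leftarrow>map (\<lambda>x. x^2) t. [:- x, 1:]))
      = Polynomial.order c (monom 1 j) + Polynomial.order c (\<Prod>x\<leftarrow>map (\<lambda>x. x^2) t. [:- x, 1:])"
      by (rule order_mult[OF nz])
    also have "\<dots> = count (mset (map (\<lambda>x. x^2) t)) c"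
      by (simp only: order_monom_nonzero[OF that] order_prod_linear add_0)
    finally show ?thesis .
  qed
  have cnt0: "count (mset (map (\<lambda>x. x^2) t)) 0 = 0" if "\<forall>x\<in>set t. x > (0::real)" for t
    using that by (auto simp: count_eq_zero_iff)
  have m2: "mset (map (\<lambda>x. x^2) s) = mset (map (\<lambda>x. x^2) s')"
  proof (rule multiset_eqI)
    fix c :: real
    show "count (mset (map (\<lambda>x. x^2) s)) c = count (mset (map (\<lambda>x. x^2) s')) c"
    proof (cases "c = 0")
      case True thus ?thesis using cnt0 s(2) s'(2) by simp
    next
      case False
      thus ?thesis using ord[OF False, of k s] ord[OF False, of k' s'] eq unfolding pe by simp
    qed
  qed
  have bk: "mset t = image_mset sqrt (mset (map (\<lambda>x. x^2) t))" if "\<forall>x\<in>set t. x > (0::real)" for t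
  proof -
    have "map sqrt (map (\<lambda>x. x^2) t) = t" using that by (induction t) auto
    thus ?thesis by (metis mset_map)
  qed
  have ms: "mset (rev s) = mset (rev s')" using bk[OF s(2)] bk[OF s'(2)] m2 by simp
  have so: "sorted (rev s)" "sorted (rev s')" using s(1) s'(1) by (simp_all add: sorted_wrt_rev)
  have "sort (rev s) = rev s" by (rule properties_for_sort) (use so in auto)
  moreover have "sort (rev s) = rev s'" by (rule properties_for_sort) (use so ms in auto)
  ultimately show ?thesis by simp
qed

lemma prod_filter_split:
  fixes f :: "'a \<Rightarrow> 'b :: comm_monoid_mult"
  shows "(\<Prod>x\<leftarrow>xs. f x) = (\<Prod>x\<leftarrow>filter P xs. f x) * (\<Prod>x\<leftarrow>filter (\<lambda>x. \<not> P x) xs. f x)"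
  by (induction xs) (auto simp: algebra_simps)

lemma prod_zero_roots:
  assumes "\<forall>x\<in>set xs. x = (0::real)"
  shows "(\<Prod>x\<leftarrow>xs. [:- x, 1:]) = monom 1 (length xs)"
  using assms
proof (induction xs)
  case Nil thus ?case by (simp add: one_pCons monom_0)
next
  case (Cons a xs)
  hence "(\<Prod>x\<leftarrow>a # xs. [:- x, 1:]) = [:0, 1:] * monom 1 (length xs)" by simp
  also have "\<dots> = monom 1 (Suc (length xs))" by (simp add: monom_Suc)
  finally show ?case by simp
qed

lemma nz_sv_of_diag:
  fixes Phi U D :: "real mat"
  assumes D: "D \<in> carrier_mat b b" and Phi: "dim_col Phi = b"
    and cp: "char_poly (transpose_mat Phi * Phi) = (\<Prod>a\<leftarrow>diag_mat D. [:- a, 1:])"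
    and Dnn: "\<forall>i<b. D $$ (i,i) \<ge> 0"
  shows "nz_singular_values Phi = rev (sort (map sqrt (filter (\<lambda>x. x > 0) (diag_mat D))))"
proof -
  define L where "L = diag_mat D"
  define F where "F = filter (\<lambda>x. x > 0) L"
  define s where "s = rev (sort (map sqrt F))"
  have lenL: "length L = b" unfolding L_def diag_mat_def using D by simp
  have Lnn: "\<forall>x\<in>set L. x \<ge> 0" unfolding L_def diag_mat_def using D Dnn by auto
  have s_pos: "\<forall>x\<in>set s. x > 0" unfolding s_def F_def by auto
  have s_sorted: "sorted_wrt (\<ge>) s" unfolding s_def by (simp add: sorted_wrt_rev)
  have lens: "length s = length F" unfolding s_def by simp
  have msF: "mset (map (\<lambda>x. x^2) s) = mset F"
  proof -
    have "map (\<lambda>x. x^2) (map sqrt F) = F" unfolding F_def by (induction L) auto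
    hence "mset F = image_mset (\<lambda>x. x^2) (mset (map sqrt F))" by (metis mset_map)
    also have "\<dots> = mset (map (\<lambda>x. x^2) s)" unfolding s_def by simp
    finally show ?thesis by simp
  qed
  have "(\<Prod>x\<leftarrow>s. [:-(x^2), 1:]) = (\<Prod>a\<leftarrow>map (\<lambda>x. x^2) s. [:- a, 1:])" by (simp add: comp_def)
  also have "\<dots> = prod_mset (image_mset (\<lambda>a. [:- a, 1:]) (mset (map (\<lambda>x. x^2) s)))"
    by (metis prod_mset_prod_list mset_map)
  also have "\<dots> = (\<Prod>a\<leftarrow>F. [:- a, 1:])" unfolding msF by (metis prod_mset_prod_list mset_map)
  finally have pF: "(\<Prod>x\<leftarrow>s. [:-(x^2), 1:]) = (\<Prod>a\<leftarrow>F. [:- a, 1:])" .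
  have z: "\<forall>x\<in>set (filter (\<lambda>x. \<not> x > 0) L). x = 0" using Lnn by auto
  have lz: "length (filter (\<lambda>x. \<not> x > 0) L) = b - length s"
    using sum_length_filter_compl[of "\<lambda>x. x > 0" L] lenL lens unfolding F_def by simp
  have spec: "char_poly (transpose_mat Phi * Phi) = monom 1 (dim_col Phi - length s) * (\<Prod>x\<leftarrow>s. [:-(x^2), 1:])"
    unfolding cp L_def[symmetric] pF Phi
    using prod_filter_split[of "\<lambda>a. [:- a, 1:]" L "\<lambda>x. x > 0"] prod_zero_roots[OF z] lz
    unfolding F_def by (simp add: mult.commute)
  show ?thesis unfolding nz_singular_values_def s_def[symmetric] F_def[symmetric] L_def[symmetric]
  proof (rule the_equality)
    show "sorted_wrt (\<ge>) s \<and> (\<forall>x\<in>set s. x > 0) \<and>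
      char_poly (transpose_mat Phi * Phi) = monom 1 (dim_col Phi - length s) * (\<Prod>x\<leftarrow>s. [:-(x^2), 1:])"
      using s_sorted s_pos spec by blast
  next
    fix s' assume "sorted_wrt (\<ge>) s' \<and> (\<forall>x\<in>set s'. x > 0) \<and>
      char_poly (transpose_mat Phi * Phi) = monom 1 (dim_col Phi - length s') * (\<Prod>x\<leftarrow>s'. [:-(x^2), 1:])"
    thus "s' = s" using sv_unique[OF s_sorted s_pos, of s'] spec by auto
  qed
qed

lemma sum_list_le_const:
  fixes xs :: "real list"
  assumes "\<forall>x\<in>set xs. x \<le> c"
  shows "sum_list xs \<le> real (length xs) * c"
  using assms by (induction xs) (auto simp: algebra_simps)

lemma sum_list_ge_const:
  fixes xs :: "real list"
  assumes "\<forall>x\<in>set xs. x \<ge> c"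
  shows "sum_list xs \<ge> real (length xs) * c"
  using assms by (induction xs) (auto simp: algebra_simps)

lemma srank_bound:
  fixes s :: "real list" and K \<delta> :: real and d :: nat
  assumes pos: "\<forall>x\<in>set s. x > 0" and rat: "\<forall>x\<in>set s. \<forall>y\<in>set s. x \<le> K * y"
    and dL: "d \<le> length s" and d1: "1 \<le> d" and \<delta>: "0 \<le> \<delta>" "\<delta> \<le> 1"
  shows "\<lceil>(1 - \<delta>) * real d / (\<delta> * K + (1 - \<delta>))\<rceil>
          \<le> int (LEAST k. sum_list (take k s) / sum_list s \<ge> 1 - \<delta>)"
proof -
  define L where "L = length s"
  have ne: "s \<noteq> []" using dL d1 by auto
  define m where "m = Min (set s)"
  have m_in: "m \<in> set s" unfolding m_def using ne by simp
  have m_pos: "m > 0" using pos m_in by auto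
  have m_le: "\<forall>x\<in>set s. m \<le> x" unfolding m_def by simp
  have x_le: "\<forall>x\<in>set s. x \<le> K * m" using rat m_in by auto
  have K1: "K \<ge> 1"
  proof -
    have "m \<le> K * m" using rat m_in by auto
    thus ?thesis using m_pos by simp
  qed
  have T: "sum_list s > 0"
  proof -
    have "sum_list s \<ge> real (length s) * m" by (rule sum_list_ge_const) (use m_le in auto)
    moreover have "real (length s) * m > 0" using ne m_pos by simp
    ultimately show ?thesis by simp
  qed
  define P where "P = (\<lambda>k. sum_list (take k s) / sum_list s \<ge> 1 - \<delta>)"
  have PL: "P L" unfolding P_def L_def using T \<delta> by simp
  define k where "k = (LEAST k. P k)"
  have Pk: "P k" unfolding k_def by (rule LeastI[of P L, OF PL])
  have den: "\<delta> * K + (1 - \<delta>) \<ge> 1"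
  proof -
    have "\<delta> * K \<ge> \<delta> * 1" using K1 \<delta> by (intro mult_left_mono) auto
    thus ?thesis by simp
  qed
  have key: "(1 - \<delta>) * real d \<le> real k * (\<delta> * K + (1 - \<delta>))"
  proof (cases "k \<ge> L")
    case True
    have "(1 - \<delta>) * real d \<le> (1 - \<delta>) * real k"
      using True dL \<delta> unfolding L_def by (intro mult_left_mono) auto
    also have "\<dots> \<le> real k * (\<delta> * K + (1 - \<delta>))" using den \<delta> K1
      by (simp add: algebra_simps)
    finally show ?thesis .
  next
    case False
    define A where "A = sum_list (take k s)"
    define R where "R = sum_list (drop k s)"
    have TAR: "sum_list s = A + R" unfolding A_def R_def
      by (metis append_take_drop_id sum_list_append)
    have "A \<ge> (1 - \<delta>) * sum_list s" using Pk T unfolding P_def A_def by (simp add: field_simps)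
    hence dAR: "\<delta> * A \<ge> (1 - \<delta>) * R" unfolding TAR by (simp add: algebra_simps)
    have lt: "length (take k s) = k" "length (drop k s) = L - k" using False unfolding L_def by auto
    have "A \<le> real k * (K * m)" unfolding A_def using sum_list_le_const[of "take k s" "K * m"] x_le lt
      by (auto dest: in_set_takeD)
    hence "\<delta> * A \<le> \<delta> * (real k * (K * m))" using \<delta> by (intro mult_left_mono) auto
    moreover have "R \<ge> real (L - k) * m" unfolding R_def using sum_list_ge_const[of "drop k s" m] m_le lt
      by (auto dest: in_set_dropD)
    hence "(1 - \<delta>) * R \<ge> (1 - \<delta>) * (real (L - k) * m)" using \<delta> by (intro mult_left_mono) auto
    ultimately have "(1 - \<delta>) * (real (L - k) * m) \<le> \<delta> * (real k * (K * m))" using dAR by linarith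
    hence "((1 - \<delta>) * real (L - k)) * m \<le> (\<delta> * real k * K) * m" by (simp add: algebra_simps)
    hence "(1 - \<delta>) * real (L - k) \<le> \<delta> * real k * K" using m_pos by simp
    moreover have "real (L - k) = real L - real k" using False by simp
    ultimately have "(1 - \<delta>) * real L \<le> real k * (\<delta> * K + (1 - \<delta>))" by (simp add: algebra_simps)
    moreover have "(1 - \<delta>) * real d \<le> (1 - \<delta>) * real L" using dL \<delta> unfolding L_def by (intro mult_left_mono) auto
    ultimately show ?thesis by linarith
  qed
  have "(1 - \<delta>) * real d / (\<delta> * K + (1 - \<delta>)) \<le> real k"
    using key den by (simp add: divide_le_eq)
  hence "\<lceil>(1 - \<delta>) * real d / (\<delta> * K + (1 - \<delta>))\<rceil> \<le> int k"
    by (simp add: ceiling_le_iff)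
  thus ?thesis unfolding k_def P_def .
qed

lemma inv_exists:
  fixes A :: "real mat"
  assumes "A \<in> carrier_mat n n" "det A \<noteq> 0"
  shows "\<exists>B\<in>carrier_mat n n. B * A = 1\<^sub>m n \<and> A * B = 1\<^sub>m n"
  using det_non_zero_imp_unit[OF assms, of "()"] unfolding Units_def ring_mat_def by auto

lemma transpose_smult_mat: "transpose_mat (k \<cdot>\<^sub>m A) = k \<cdot>\<^sub>m transpose_mat A"
  by (rule eq_matI) auto

lemma smult_mat_vec: "A \<in> carrier_mat nr nc \<Longrightarrow> v \<in> carrier_vec nc \<Longrightarrow> (k \<cdot>\<^sub>m A) *\<^sub>v v = k \<cdot>\<^sub>v (A *\<^sub>v v)"
  by (rule eq_vecI) (auto simp: scalar_prod_def sum_distrib_left mult.assoc)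

lemma pos_vec:
  fixes v :: "real vec"
  assumes "v \<in> carrier_vec n" "v \<noteq> 0\<^sub>v n"
  shows "v \<bullet> v > 0"
proof -
  obtain j where j: "j < n" "v $ j \<noteq> 0" using assms by (metis carrier_vecD eq_vecI index_zero_vec(1) index_zero_vec(2))
  show ?thesis unfolding scalar_prod_def using assms(1) j
    by (intro sum_pos2[of _ j]) (auto simp: zero_less_mult_iff)
qed

lemma nonneg_vec:
  fixes v :: "real vec"
  shows "v \<bullet> v \<ge> 0"
  unfolding scalar_prod_def by (intro sum_nonneg) auto

lemma orth_eig:
  fixes U D A :: "real mat"
  assumes U: "U \<in> carrier_mat n n" and D: "D \<in> carrier_mat n n" and UtU: "transpose_mat U * U = 1\<^sub>m n"
    and Dd: "diagonal_mat D" and A: "A = U * D * transpose_mat U" and i: "i < n"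
  shows "A *\<^sub>v (U *\<^sub>v unit_vec n i) = D $$ (i,i) \<cdot>\<^sub>v (U *\<^sub>v unit_vec n i)"
    and "transpose_mat U *\<^sub>v (U *\<^sub>v unit_vec n i) = unit_vec n i"
    and "U *\<^sub>v unit_vec n i \<noteq> 0\<^sub>v n"
proof -
  have e: "unit_vec n i \<in> carrier_vec n" by simp
  have Ut: "transpose_mat U \<in> carrier_mat n n" using U by simp
  have Ue: "U *\<^sub>v unit_vec n i \<in> carrier_vec n" using U by simp
  show te: "transpose_mat U *\<^sub>v (U *\<^sub>v unit_vec n i) = unit_vec n i"
    using assoc_mult_mat_vec[OF Ut U e] UtU by simp
  have UD: "U * D \<in> carrier_mat n n" using U D by simp
  have De: "D *\<^sub>v unit_vec n i = D $$ (i,i) \<cdot>\<^sub>v unit_vec n i"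
  proof (rule eq_vecI)
    fix k assume "k < dim_vec (D $$ (i,i) \<cdot>\<^sub>v unit_vec n i)"
    hence k: "k < n" by simp
    show "(D *\<^sub>v unit_vec n i) $ k = (D $$ (i,i) \<cdot>\<^sub>v unit_vec n i) $ k"
      unfolding diag_mult_vec[OF D Dd e k] using k i by (cases "k = i") auto
  qed (use D in simp)
  have "A *\<^sub>v (U *\<^sub>v unit_vec n i) = U *\<^sub>v (D *\<^sub>v (transpose_mat U *\<^sub>v (U *\<^sub>v unit_vec n i)))"
  proof -
    have tUe: "transpose_mat U *\<^sub>v (U *\<^sub>v unit_vec n i) \<in> carrier_vec n" using Ut Ue by simp
    show ?thesis unfolding A by (simp only: assoc_mult_mat_vec[OF UD Ut Ue] assoc_mult_mat_vec[OF U D tUe])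
  qed
  also have "\<dots> = D $$ (i,i) \<cdot>\<^sub>v (U *\<^sub>v unit_vec n i)" unfolding te De using U by (simp add: mult_mat_vec)
  finally show "A *\<^sub>v (U *\<^sub>v unit_vec n i) = D $$ (i,i) \<cdot>\<^sub>v (U *\<^sub>v unit_vec n i)" .
  show "U *\<^sub>v unit_vec n i \<noteq> 0\<^sub>v n"
  proof
    assume "U *\<^sub>v unit_vec n i = 0\<^sub>v n"
    moreover have "transpose_mat U *\<^sub>v 0\<^sub>v n = 0\<^sub>v n" by (rule eq_vecI) (use Ut in auto)
    ultimately have "unit_vec n i = (0\<^sub>v n :: real vec)" using te by simp
    hence "(unit_vec n i :: real vec) $ i = 0\<^sub>v n $ i" by simp
    thus False using i by simp
  qed
qed

lemma orth_cp:
  fixes U D A :: "real mat"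
  assumes U: "U \<in> carrier_mat n n" and D: "D \<in> carrier_mat n n" and UtU: "transpose_mat U * U = 1\<^sub>m n"
    and UUt: "U * transpose_mat U = 1\<^sub>m n"
    and Dd: "diagonal_mat D" and A: "A = U * D * transpose_mat U"
  shows "char_poly A = (\<Prod>a\<leftarrow>diag_mat D. [:- a, 1:])"
proof -
  have Ac: "A \<in> carrier_mat n n" unfolding A using U D by simp
  have "similar_mat A D" by (rule similar_matI[of A D U "transpose_mat U" n]) (use Ac U D UtU UUt A in auto)
  hence "char_poly A = char_poly D" by (rule char_poly_similar)
  also have "\<dots> = (\<Prod>a\<leftarrow>diag_mat D. [:- a, 1:])"
    by (rule char_poly_upper_triangular[OF D]) (use Dd D in \<open>auto simp: upper_triangular_def diagonal_mat_def\<close>)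
  finally show ?thesis .
qed

lemma sum_unit_sq:
  fixes f :: "nat \<Rightarrow> real"
  assumes "i < n"
  shows "(\<Sum>k<n. f k * ((unit_vec n i :: real vec) $ k)^2) = f i"
proof -
  have "(\<Sum>k<n. f k * ((unit_vec n i :: real vec) $ k)^2) = (\<Sum>k<n. if k = i then f i else 0)"
    by (intro sum.cong refl) (auto simp: unit_vec_def)
  thus ?thesis using assms by simp
qed

lemma diag_triple:
  fixes R1 D R2 :: "real mat"
  assumes R1: "R1 \<in> carrier_mat m b" and D: "D \<in> carrier_mat b b" and Dd: "diagonal_mat D"
    and R2: "R2 \<in> carrier_mat b m2" and j: "j < m" and l: "l < m2"
  shows "(R1 * D * R2) $$ (j,l) = (\<Sum>k<b. R1 $$ (j,k) * D $$ (k,k) * R2 $$ (k,l))"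
proof -
  have inner: "(\<Sum>ia = 0..<b. D $$ (i,ia) * R2 $$ (ia,l)) = D $$ (i,i) * R2 $$ (i,l)" if i: "i < b" for i
  proof -
    have "(\<Sum>ia = 0..<b. D $$ (i,ia) * R2 $$ (ia,l)) = (\<Sum>ia = 0..<b. if ia = i then D $$ (i,i) * R2 $$ (i,l) else 0)"
      using D Dd i unfolding diagonal_mat_def by (intro sum.cong) auto
    thus ?thesis using i by simp
  qed
  have "(R1 * D * R2) $$ (j,l) = (\<Sum>i = 0..<b. R1 $$ (j,i) * (\<Sum>ia = 0..<b. D $$ (i,ia) * R2 $$ (ia,l)))"
    using R1 D R2 j l by (simp add: scalar_prod_def)
  also have "\<dots> = (\<Sum>k<b. R1 $$ (j,k) * D $$ (k,k) * R2 $$ (k,l))"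
    unfolding lessThan_atLeast0 by (intro sum.cong) (auto simp: inner)
  finally show ?thesis .
qed

theorem theorem3:
  fixes n a b :: nat and Z W Q S :: "real mat" and \<delta> :: real
  assumes Z: "Z \<in> carrier_mat n a"
    and W: "W \<in> carrier_mat a b"
    and Q: "Q \<in> carrier_mat a b"
    and S: "S \<in> carrier_mat b b"
    and Q_orth: "transpose_mat Q * Q = 1\<^sub>m b"
    and S_psd: "psd_mat S"
    and S_sqrt: "S * S = transpose_mat W * W"
    and polar: "W = Q * S"
    and d_pos: "vec_space.rank b
                  (transpose_mat Q * ((1 / real n) \<cdot>\<^sub>m (transpose_mat Z * Z)) * Q) \<ge> 1"
    and delta: "0 \<le> \<delta>" "\<delta> \<le> 1"
    and eps: "sqrt (DfI W) < 1"
  shows "(let \<Phi> = Z * W;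
              \<Sigma>\<^sub>Z = (1 / real n) \<cdot>\<^sub>m (transpose_mat Z * Z);
              M = transpose_mat Q * \<Sigma>\<^sub>Z * Q;
              d = vec_space.rank b M;
              \<eta>\<^sub>1 = Max {e. eigenvalue M e \<and> e > 0};
              \<eta>\<^sub>d = Min {e. eigenvalue M e \<and> e > 0};
              \<epsilon> = sqrt (DfI W)
          in int (srank \<delta> \<Phi>) \<ge>
               \<lceil>(1 - \<delta>) * real d /
                 (\<delta> * sqrt ((1 + \<epsilon>) / (1 - \<epsilon>)) * sqrt (\<eta>\<^sub>1 / \<eta>\<^sub>d) + (1 - \<delta>))\<rceil>
             \<and> (\<Sigma>\<^sub>Z = 1\<^sub>m a \<longrightarrow>
                int (srank \<delta> \<Phi>) \<ge>
                 \<lceil>(1 - \<delta>) * real d /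
                   (\<delta> * sqrt ((1 + \<epsilon>) / (1 - \<epsilon>)) + (1 - \<delta>))\<rceil>))"
proof -
  define SZ where "SZ = (1 / real n) \<cdot>\<^sub>m (transpose_mat Z * Z)"
  define M where "M = transpose_mat Q * SZ * Q"
  define Phi where "Phi = Z * W"
  define d where "d = vec_space.rank b M"
  define ES where "ES = {e. eigenvalue M e \<and> e > 0}"
  define eta1 where "eta1 = Max ES"
  define etad where "etad = Min ES"
  define eps where "eps = sqrt (DfI W)"
  define K where "K = sqrt ((1 + eps) / (1 - eps)) * sqrt (eta1 / etad)"
  define C where "C = Z * Q"
  define G where "G = transpose_mat W * W - 1\<^sub>m b"
  have d1: "d \<ge> 1" using d_pos unfolding d_def M_def SZ_def .
  have C: "C \<in> carrier_mat n b" unfolding C_def using Z Q by simp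
  have SZc: "SZ \<in> carrier_mat a a" unfolding SZ_def using Z by simp
  have Mc: "M \<in> carrier_mat b b" unfolding M_def using Q SZc by simp
  have Phic: "Phi \<in> carrier_mat n b" unfolding Phi_def using Z W by simp
  have G: "G \<in> carrier_mat b b" unfolding G_def using W by (auto intro!: minus_carrier_mat)
  have eps1: "eps < 1" unfolding eps_def using eps .
  have DfI_G: "DfI W = (\<Sum>i<b. \<Sum>j<b. (G $$ (i,j))^2)"
    unfolding DfI_def Let_def G_def using W by simp
  have eps0: "0 \<le> eps" unfolding eps_def DfI_G by (simp add: sum_nonneg)
  have n0: "n > 0"
  proof (rule ccontr)
    assume "\<not> n > 0"
    hence "n = 0" by simp
    hence "M = 0\<^sub>m b b" unfolding M_def SZ_def using Q Z by (intro eq_matI) (auto simp: scalar_prod_def)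
    hence "d = 0" unfolding d_def by (simp add: vec_space.rank_0I)
    thus False using d1 by simp
  qed
  have Zt: "transpose_mat Z \<in> carrier_mat a n" using Z by simp
  have Qt: "transpose_mat Q \<in> carrier_mat b a" using Q by simp
  have X: "transpose_mat Z * Z \<in> carrier_mat a a" using Z by simp
  have ZQ: "Z * Q \<in> carrier_mat n b" using Z Q by simp
  have QtX: "transpose_mat Q * (transpose_mat Z * Z) \<in> carrier_mat b a" using Q Z by simp
  have XQ: "(transpose_mat Z * Z) * Q \<in> carrier_mat a b" using Q Z by simp
  have M1: "M = (1 / real n) \<cdot>\<^sub>m (transpose_mat Q * (transpose_mat Z * Z) * Q)"
    unfolding M_def SZ_def
    by (simp only: mult_smult_distrib[OF Qt X] mult_smult_assoc_mat[OF QtX Q])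
  have CtC: "transpose_mat C * C = transpose_mat Q * (transpose_mat Z * Z) * Q"
  proof -
    have "transpose_mat C = transpose_mat Q * transpose_mat Z" unfolding C_def by (rule transpose_mult[OF Z Q])
    hence "transpose_mat C * C = (transpose_mat Q * transpose_mat Z) * (Z * Q)" unfolding C_def by simp
    also have "\<dots> = transpose_mat Q * (transpose_mat Z * (Z * Q))" by (rule assoc_mult_mat[OF Qt Zt ZQ])
    also have "\<dots> = transpose_mat Q * ((transpose_mat Z * Z) * Q)" by (simp only: assoc_mult_mat[OF Zt Z Q])
    also have "\<dots> = transpose_mat Q * (transpose_mat Z * Z) * Q" by (rule assoc_mult_mat[OF Qt X Q, symmetric])
    finally show ?thesis .
  qed
  have M2: "M = (1 / real n) \<cdot>\<^sub>m (transpose_mat C * C)" unfolding M1 CtC ..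
  have nM: "real n \<cdot>\<^sub>m M = transpose_mat C * C" unfolding M2 using n0 C
    by (intro eq_matI) auto
  have Msym: "transpose_mat M = M" unfolding M2 transpose_smult_mat using C
    by (simp add: transpose_mult[of _ b n])
  have St: "transpose_mat S = S" using S_psd unfolding psd_mat_def by simp
  have PhiCS: "Phi = C * S" unfolding Phi_def C_def polar using Z Q S by simp
  have Snorm: "(S *\<^sub>v x) \<bullet> (S *\<^sub>v x) = x \<bullet> x + x \<bullet> (G *\<^sub>v x)" if x: "x \<in> carrier_vec b" for x
  proof -
    have "(S *\<^sub>v x) \<bullet> (S *\<^sub>v x) = x \<bullet> ((transpose_mat S * S) *\<^sub>v x)" by (rule norm_mult[OF S x])
    also have "transpose_mat S * S = G + 1\<^sub>m b" unfolding St S_sqrt G_def using W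
      by (intro eq_matI) auto
    also have "(G + 1\<^sub>m b) *\<^sub>v x = G *\<^sub>v x + x" using G x by (simp add: add_mult_distrib_mat_vec)
    also have "x \<bullet> (G *\<^sub>v x + x) = x \<bullet> (G *\<^sub>v x) + x \<bullet> x"
      using G x by (simp add: scalar_prod_add_distrib[of _ b])
    finally show ?thesis by simp
  qed
  have Gb: "\<bar>x \<bullet> (G *\<^sub>v x)\<bar> \<le> eps * (x \<bullet> x)" if x: "x \<in> carrier_vec b" for x
    using quad_frob[OF G x] unfolding eps_def DfI_G .
  have Sup: "(S *\<^sub>v x) \<bullet> (S *\<^sub>v x) \<le> (1 + eps) * (x \<bullet> x)" if x: "x \<in> carrier_vec b" for x
    using Snorm[OF x] Gb[OF x] by (simp add: algebra_simps)
  have Slo: "(S *\<^sub>v x) \<bullet> (S *\<^sub>v x) \<ge> (1 - eps) * (x \<bullet> x)" if x: "x \<in> carrier_vec b" for x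
    using Snorm[OF x] Gb[OF x] by (simp add: algebra_simps)
  have CM: "(C *\<^sub>v y) \<bullet> (C *\<^sub>v y) = real n * (y \<bullet> (M *\<^sub>v y))" if y: "y \<in> carrier_vec b" for y
  proof -
    have "(C *\<^sub>v y) \<bullet> (C *\<^sub>v y) = y \<bullet> ((transpose_mat C * C) *\<^sub>v y)" by (rule norm_mult[OF C y])
    also have "\<dots> = y \<bullet> (real n \<cdot>\<^sub>v (M *\<^sub>v y))" unfolding nM[symmetric] using Mc y by (simp add: smult_mat_vec)
    also have "\<dots> = real n * (y \<bullet> (M *\<^sub>v y))" using Mc y by simp
    finally show ?thesis .
  qed
  obtain V E where VE: "V \<in> carrier_mat b b" "E \<in> carrier_mat b b" "transpose_mat V * V = 1\<^sub>m b"
    "V * transpose_mat V = 1\<^sub>m b" "diagonal_mat E" "M = V * E * transpose_mat V"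
    using spectral[OF Mc Msym] by blast
  note qM = orth_quad[OF VE(1-6)]
  note eM = orth_eig[OF VE(1-3) VE(5-6)]
  have Enn: "\<forall>i<b. E $$ (i,i) \<ge> 0"
  proof (intro allI impI)
    fix i assume i: "i < b"
    define y where "y = V *\<^sub>v unit_vec b i"
    have y: "y \<in> carrier_vec b" unfolding y_def using VE by simp
    have "y \<bullet> (M *\<^sub>v y) = E $$ (i,i)" unfolding qM(1)[OF y] unfolding y_def eM(2)[OF i]
      by (rule sum_unit_sq[OF i])
    moreover have "real n * (y \<bullet> (M *\<^sub>v y)) \<ge> 0" unfolding CM[OF y, symmetric] by (rule nonneg_vec)
    ultimately show "E $$ (i,i) \<ge> 0" using n0 by (simp add: zero_le_mult_iff)
  qed
  have ES_sub: "ES \<subseteq> {E $$ (i,i) | i. i < b}"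
  proof
    fix e assume "e \<in> ES"
    hence "eigenvalue M e" unfolding ES_def by simp
    hence "poly (char_poly M) e = 0" using eigenvalue_root_char_poly[OF Mc] by simp
    hence "poly (\<Prod>a\<leftarrow>diag_mat E. [:- a, 1:]) e = 0" unfolding orth_cp[OF VE] .
    then obtain a where "a \<in> set (diag_mat E)" "e = a"
      by (auto simp: poly_prod_list_zero_iff)
    thus "e \<in> {E $$ (i,i) | i. i < b}" unfolding diag_mat_def using VE by auto
  qed
  have ES_in: "E $$ (i,i) \<in> ES" if i: "i < b" "E $$ (i,i) > 0" for i
  proof -
    have "eigenvector M (V *\<^sub>v unit_vec b i) (E $$ (i,i))"
      unfolding eigenvector_def using eM(1,3)[OF i(1)] VE Mc by auto
    thus ?thesis unfolding ES_def eigenvalue_def using i by auto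
  qed
  have ES_fin: "finite ES" using ES_sub by (rule finite_subset) simp
  have ES_ne: "ES \<noteq> {}"
  proof
    assume "ES = {}"
    have "\<forall>i<b. E $$ (i,i) = 0"
    proof (intro allI impI)
      fix i assume i: "i < b"
      show "E $$ (i,i) = 0"
      proof (rule ccontr)
        assume "E $$ (i,i) \<noteq> 0"
        hence "E $$ (i,i) > 0" using Enn i by (simp add: less_le)
        thus False using ES_in[OF i] \<open>ES = {}\<close> by simp
      qed
    qed
    hence "E = 0\<^sub>m b b" using VE(2,5) unfolding diagonal_mat_def by (intro eq_matI) auto
    hence "M = 0\<^sub>m b b" unfolding VE(6) using VE by simp
    hence "d = 0" unfolding d_def by (simp add: vec_space.rank_0I)
    thus False using d1 by simp
  qed
  have etad_in: "etad \<in> ES" unfolding etad_def using ES_fin ES_ne by simp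
  have etad_pos: "etad > 0" using etad_in unfolding ES_def by simp
  have eta_le: "etad \<le> eta1" unfolding etad_def eta1_def using ES_fin ES_ne by simp
  have E_le: "E $$ (i,i) \<le> eta1" if i: "i < b" for i
  proof (cases "E $$ (i,i) > 0")
    case True thus ?thesis unfolding eta1_def using ES_in[OF i True] ES_fin by simp
  next
    case False thus ?thesis using Enn i etad_pos eta_le by force
  qed
  have E_ge: "E $$ (i,i) \<ge> etad" if i: "i < b" "E $$ (i,i) > 0" for i
    unfolding etad_def using ES_in[OF i] ES_fin by simp
  have R1: "y \<bullet> (M *\<^sub>v y) \<le> eta1 * (y \<bullet> y)" if y: "y \<in> carrier_vec b" for y
  proof -
    have "y \<bullet> (M *\<^sub>v y) = (\<Sum>i<b. E $$ (i,i) * ((transpose_mat V *\<^sub>v y) $ i)^2)" by (rule qM(1)[OF y])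
    also have "\<dots> \<le> (\<Sum>i<b. eta1 * ((transpose_mat V *\<^sub>v y) $ i)^2)"
      by (intro sum_mono mult_right_mono) (auto simp: E_le)
    also have "\<dots> = eta1 * (y \<bullet> y)" unfolding qM(3)[OF y] by (simp add: sum_distrib_left)
    finally show ?thesis .
  qed
  have R2: "(M *\<^sub>v y) \<bullet> (M *\<^sub>v y) \<ge> etad * (y \<bullet> (M *\<^sub>v y))" if y: "y \<in> carrier_vec b" for y
  proof -
    have t: "etad * E $$ (i,i) \<le> (E $$ (i,i))^2" if i: "i < b" for i
    proof (cases "E $$ (i,i) > 0")
      case True thus ?thesis using E_ge[OF i True] by (simp add: power2_eq_square mult_right_mono)
    next
      case False thus ?thesis using Enn i by force
    qed
    have "etad * (y \<bullet> (M *\<^sub>v y)) = (\<Sum>i<b. (etad * E $$ (i,i)) * ((transpose_mat V *\<^sub>v y) $ i)^2)"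
      unfolding qM(1)[OF y] by (simp add: sum_distrib_left mult.assoc)
    also have "\<dots> \<le> (\<Sum>i<b. (E $$ (i,i))^2 * ((transpose_mat V *\<^sub>v y) $ i)^2)"
      by (intro sum_mono mult_right_mono) (auto simp: t)
    also have "\<dots> = (M *\<^sub>v y) \<bullet> (M *\<^sub>v y)" by (rule qM(2)[OF y, symmetric])
    finally show ?thesis .
  qed
  define P where "P = transpose_mat Phi * Phi"
  have Pc: "P \<in> carrier_mat b b" unfolding P_def using Phic by simp
  have Psym: "transpose_mat P = P" unfolding P_def using Phic by (simp add: transpose_mult[of _ b n])
  obtain U D where UD: "U \<in> carrier_mat b b" "D \<in> carrier_mat b b" "transpose_mat U * U = 1\<^sub>m b"
    "U * transpose_mat U = 1\<^sub>m b" "diagonal_mat D" "P = U * D * transpose_mat U"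
    using spectral[OF Pc Psym] by blast
  note qP = orth_quad[OF UD(1-6)]
  note eP = orth_eig[OF UD(1-3) UD(5-6)]
  have uP: "(U *\<^sub>v unit_vec b i) \<bullet> (P *\<^sub>v (U *\<^sub>v unit_vec b i)) = D $$ (i,i)" if i: "i < b" for i
  proof -
    have y: "U *\<^sub>v unit_vec b i \<in> carrier_vec b" using UD by simp
    show ?thesis unfolding qP(1)[OF y] eP(2)[OF i] by (rule sum_unit_sq[OF i])
  qed
  have Dnn: "\<forall>i<b. D $$ (i,i) \<ge> 0"
  proof (intro allI impI)
    fix i assume i: "i < b"
    have y: "U *\<^sub>v unit_vec b i \<in> carrier_vec b" using UD by simp
    show "D $$ (i,i) \<ge> 0" unfolding uP[OF i, symmetric] P_def norm_mult[OF Phic y, symmetric]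
      by (rule nonneg_vec)
  qed
  have cpP: "char_poly P = (\<Prod>a\<leftarrow>diag_mat D. [:- a, 1:])" by (rule orth_cp[OF UD])
  define s where "s = rev (sort (map sqrt (filter (\<lambda>x. x > 0) (diag_mat D))))"
  have nzs: "nz_singular_values Phi = s" unfolding s_def
    by (rule nz_sv_of_diag[OF UD(2) _ cpP[unfolded P_def] Dnn]) (use Phic in simp)
  have Ct: "transpose_mat C \<in> carrier_mat b n" using C by simp
  have Phit: "transpose_mat Phi = S * transpose_mat C" unfolding PhiCS transpose_mult[OF C S] St ..
  have Dbounds: "real n * (1 - eps) * etad \<le> D $$ (i,i) \<and> D $$ (i,i) \<le> real n * (1 + eps) * eta1"
    if i: "i < b" and Dp: "D $$ (i,i) > 0" for i
  proof -
    define u where "u = U *\<^sub>v unit_vec b i"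
    define lam where "lam = D $$ (i,i)"
    have u: "u \<in> carrier_vec b" unfolding u_def using UD by simp
    have uu: "u \<bullet> u = 1" unfolding qP(3)[OF u] unfolding u_def eP(2)[OF i]
      using sum_unit_sq[OF i, of "\<lambda>_. 1"] by simp
    have Pu: "P *\<^sub>v u = lam \<cdot>\<^sub>v u" unfolding u_def lam_def by (rule eP(1)[OF i])
    define y where "y = S *\<^sub>v u"
    have y: "y \<in> carrier_vec b" unfolding y_def using S u by simp
    have Phiu: "Phi *\<^sub>v u = C *\<^sub>v y" unfolding y_def PhiCS by (rule assoc_mult_mat_vec[OF C S u])
    have lamPhi: "(Phi *\<^sub>v u) \<bullet> (Phi *\<^sub>v u) = lam"
      using norm_mult[OF Phic u] Pu uu u unfolding P_def by simp
    have lamM: "lam = real n * (y \<bullet> (M *\<^sub>v y))" using lamPhi CM[OF y] Phiu by simp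
    have up: "lam \<le> real n * (1 + eps) * eta1"
    proof -
      have "y \<bullet> (M *\<^sub>v y) \<le> eta1 * (y \<bullet> y)" by (rule R1[OF y])
      also have "\<dots> \<le> eta1 * ((1 + eps) * (u \<bullet> u))" unfolding y_def
        using Sup[OF u] eta_le etad_pos by (intro mult_left_mono) auto
      finally have "y \<bullet> (M *\<^sub>v y) \<le> (1 + eps) * eta1" using uu by (simp add: algebra_simps)
      thus ?thesis unfolding lamM using n0 by (simp add: mult.assoc mult_left_mono)
    qed
    define t where "t = M *\<^sub>v y"
    have t: "t \<in> carrier_vec b" unfolding t_def using Mc y by simp
    have CtC: "transpose_mat C *\<^sub>v (C *\<^sub>v y) = real n \<cdot>\<^sub>v t"
    proof -
      have "transpose_mat C *\<^sub>v (C *\<^sub>v y) = (transpose_mat C * C) *\<^sub>v y"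
        by (rule assoc_mult_mat_vec[OF Ct C y, symmetric])
      also have "\<dots> = real n \<cdot>\<^sub>v t" unfolding nM[symmetric] t_def using Mc y by (simp add: smult_mat_vec)
      finally show ?thesis .
    qed
    have "lam \<cdot>\<^sub>v u = transpose_mat Phi *\<^sub>v (Phi *\<^sub>v u)"
      unfolding Pu[symmetric] P_def by (rule assoc_mult_mat_vec[OF _ Phic u]) (use Phic in simp)
    also have "\<dots> = S *\<^sub>v (transpose_mat C *\<^sub>v (C *\<^sub>v y))"
      unfolding Phit Phiu by (rule assoc_mult_mat_vec[OF S Ct]) (use C y in simp)
    also have "\<dots> = real n \<cdot>\<^sub>v (S *\<^sub>v t)" unfolding CtC using S t by (simp add: mult_mat_vec)
    finally have lu: "lam \<cdot>\<^sub>v u = real n \<cdot>\<^sub>v (S *\<^sub>v t)" .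
    have St_c: "S *\<^sub>v t \<in> carrier_vec b" using S t by simp
    have "lam * lam = (lam \<cdot>\<^sub>v u) \<bullet> (lam \<cdot>\<^sub>v u)" using u uu by simp
    also have "\<dots> = real n * real n * ((S *\<^sub>v t) \<bullet> (S *\<^sub>v t))" unfolding lu using St_c by simp
    also have "\<dots> \<ge> real n * real n * ((1 - eps) * (t \<bullet> t))"
      using Slo[OF t] by (rule mult_left_mono) simp
    finally have l1: "lam * lam \<ge> real n * real n * ((1 - eps) * (t \<bullet> t))" .
    have "t \<bullet> t \<ge> etad * (y \<bullet> (M *\<^sub>v y))" unfolding t_def by (rule R2[OF y])
    hence "(1 - eps) * (t \<bullet> t) \<ge> (1 - eps) * (etad * (y \<bullet> (M *\<^sub>v y)))"
      by (rule mult_left_mono) (use eps1 in simp)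
    hence "real n * real n * ((1 - eps) * (t \<bullet> t)) \<ge> real n * real n * ((1 - eps) * (etad * (y \<bullet> (M *\<^sub>v y))))"
      by (rule mult_left_mono) simp
    also have "real n * real n * ((1 - eps) * (etad * (y \<bullet> (M *\<^sub>v y)))) = (real n * (1 - eps) * etad) * lam"
      unfolding lamM by (simp add: algebra_simps)
    finally have "lam * lam \<ge> (real n * (1 - eps) * etad) * lam" using l1 by linarith
    hence lo: "lam \<ge> real n * (1 - eps) * etad" using Dp unfolding lam_def by simp
    show ?thesis using up lo unfolding lam_def by simp
  qed
  have detS: "det S \<noteq> 0"
  proof
    assume "det S = 0"
    then obtain v where v: "v \<in> carrier_vec b" "v \<noteq> 0\<^sub>v b" "S *\<^sub>v v = 0\<^sub>v b"
      using det_0_iff_vec_prod_zero[OF S] by blast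
    have "(1 - eps) * (v \<bullet> v) \<le> 0" using Slo[OF v(1)] v(3) by simp
    moreover have "(1 - eps) * (v \<bullet> v) > 0" using pos_vec[OF v(1,2)] eps1 by simp
    ultimately show False by simp
  qed
  obtain S' where S': "S' \<in> carrier_mat b b" "S' * S = 1\<^sub>m b" "S * S' = 1\<^sub>m b"
    using inv_exists[OF S detS] by blast
  have PS: "P = S * (transpose_mat C * C) * S"
  proof -
    have "P = (S * transpose_mat C) * (C * S)" unfolding P_def Phit unfolding PhiCS ..
    also have "\<dots> = S * (transpose_mat C * (C * S))"
      by (rule assoc_mult_mat[OF S Ct, of _ b]) (use C S in simp)
    also have "\<dots> = S * ((transpose_mat C * C) * S)" by (simp only: assoc_mult_mat[OF Ct C S])
    also have "\<dots> = S * (transpose_mat C * C) * S"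
      by (rule assoc_mult_mat[OF S _ S, symmetric]) (use C in simp)
    finally show ?thesis .
  qed
  have CtCc: "transpose_mat C * C \<in> carrier_mat b b" using C by simp
  have MSP: "M = (1 / real n) \<cdot>\<^sub>m (S' * P * S')"
  proof -
    have SX: "S * (transpose_mat C * C) \<in> carrier_mat b b" using S CtCc by simp
    have SXS: "S * (transpose_mat C * C) * S \<in> carrier_mat b b" using S CtCc by simp
    have "S' * P * S' = S' * ((S * (transpose_mat C * C) * S) * S')"
      unfolding PS by (rule assoc_mult_mat[OF S'(1) SXS S'(1)])
    also have "(S * (transpose_mat C * C) * S) * S' = S * (transpose_mat C * C)"
      using assoc_mult_mat[OF SX S S'(1)] S'(3) right_mult_one_mat[OF SX] by simp
    also have "S' * (S * (transpose_mat C * C)) = transpose_mat C * C"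
      using assoc_mult_mat[OF S'(1) S CtCc, symmetric] S'(2) left_mult_one_mat[OF CtCc] by simp
    finally show ?thesis unfolding M2 by simp
  qed
  define R1 where "R1 = S' * U"
  define R2 where "R2 = transpose_mat U * S'"
  have R1: "R1 \<in> carrier_mat b b" unfolding R1_def using S' UD by simp
  have R2: "R2 \<in> carrier_mat b b" unfolding R2_def using S' UD by simp
  have SPS: "S' * P * S' = R1 * D * R2"
    unfolding R1_def R2_def UD(6) using S' UD by (simp add: assoc_mult_mat[of _ b b _ b _ b])
  define I where "I = {k. k < b \<and> D $$ (k,k) > 0}"
  have Mrep: "M = mat b b (\<lambda>(j,l). \<Sum>k\<in>I. ((1 / real n) * R1 $$ (j,k) * D $$ (k,k)) * R2 $$ (k,l))"
  proof (rule eq_matI)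
    fix j l assume jl: "j < dim_row (mat b b (\<lambda>(j,l). \<Sum>k\<in>I. ((1 / real n) * R1 $$ (j,k) * D $$ (k,k)) * R2 $$ (k,l)))"
      "l < dim_col (mat b b (\<lambda>(j,l). \<Sum>k\<in>I. ((1 / real n) * R1 $$ (j,k) * D $$ (k,k)) * R2 $$ (k,l)))"
    hence j: "j < b" and l: "l < b" by auto
    have "M $$ (j,l) = (1 / real n) * (R1 * D * R2) $$ (j,l)"
      unfolding MSP SPS by (rule index_smult_mat(1)) (use j l R1 R2 UD in auto)
    also have "\<dots> = (1 / real n) * (\<Sum>k<b. R1 $$ (j,k) * D $$ (k,k) * R2 $$ (k,l))"
      unfolding diag_triple[OF R1 UD(2) UD(5) R2 j l] ..
    also have "\<dots> = (\<Sum>k<b. ((1 / real n) * R1 $$ (j,k) * D $$ (k,k)) * R2 $$ (k,l))"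
      by (simp add: sum_distrib_left mult.assoc)
    also have "\<dots> = (\<Sum>k\<in>I. ((1 / real n) * R1 $$ (j,k) * D $$ (k,k)) * R2 $$ (k,l))"
    proof -
      have "(\<Sum>k\<in>I. ((1 / real n) * R1 $$ (j,k) * D $$ (k,k)) * R2 $$ (k,l))
          = (\<Sum>k\<in>{..<b}. ((1 / real n) * R1 $$ (j,k) * D $$ (k,k)) * R2 $$ (k,l))"
      proof (rule sum.mono_neutral_left)
        show "\<forall>k\<in>{..<b} - I. (1 / real n) * R1 $$ (j,k) * D $$ (k,k) * R2 $$ (k,l) = 0"
        proof
          fix k assume "k \<in> {..<b} - I"
          hence "D $$ (k,k) = 0" using Dnn unfolding I_def by force
          thus "(1 / real n) * R1 $$ (j,k) * D $$ (k,k) * R2 $$ (k,l) = 0" by simp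
        qed
      qed (auto simp: I_def)
      thus ?thesis by simp
    qed
    finally show "M $$ (j,l) = mat b b (\<lambda>(j,l). \<Sum>k\<in>I. ((1 / real n) * R1 $$ (j,k) * D $$ (k,k)) * R2 $$ (k,l)) $$ (j,l)"
      using j l by simp
  qed (use Mc in auto)
  have dI: "d \<le> card I" unfolding d_def Mrep
    by (rule rank_sum_rank1[of I b b "\<lambda>k j. (1 / real n) * R1 $$ (j,k) * D $$ (k,k)" "\<lambda>k l. R2 $$ (k,l)"])
      (simp add: I_def)
  have "length s = length (filter (\<lambda>x. x > 0) (diag_mat D))" unfolding s_def by simp
  also have "\<dots> = card I" unfolding length_filter_conv_card I_def diag_mat_def using UD
    by (simp, intro arg_cong[where f = card] Collect_cong) auto
  finally have dlen: "d \<le> length s" using dI by simp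
  have spos: "\<forall>x\<in>set s. x > 0" unfolding s_def by auto
  have sD: "\<exists>i<b. D $$ (i,i) > 0 \<and> x = sqrt (D $$ (i,i))" if "x \<in> set s" for x
    using that UD unfolding s_def diag_mat_def by auto
  have srat: "\<forall>x\<in>set s. \<forall>y\<in>set s. x \<le> K * y"
  proof (intro ballI)
    fix x y assume "x \<in> set s" "y \<in> set s"
    then obtain i j where i: "i < b" "D $$ (i,i) > 0" "x = sqrt (D $$ (i,i))"
      and j: "j < b" "D $$ (j,j) > 0" "y = sqrt (D $$ (j,j))" using sD by blast
    define c where "c = (1 + eps) / (1 - eps) * (eta1 / etad)"
    have Kc: "K = sqrt c" unfolding K_def c_def by (simp only: real_sqrt_mult)
    have c0: "c \<ge> 0" unfolding c_def using eps0 eps1 etad_pos eta_le by simp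
    have hi: "D $$ (i,i) \<le> real n * (1 + eps) * eta1" using Dbounds[OF i(1,2)] by simp
    have lo: "real n * (1 - eps) * etad \<le> D $$ (j,j)" using Dbounds[OF j(1,2)] by simp
    have "c * (real n * (1 - eps) * etad) = real n * (1 + eps) * eta1"
      unfolding c_def using eps1 etad_pos by (simp add: field_simps)
    moreover have "c * (real n * (1 - eps) * etad) \<le> c * D $$ (j,j)" using lo c0 by (intro mult_left_mono)
    ultimately have "D $$ (i,i) \<le> c * D $$ (j,j)" using hi by linarith
    hence "sqrt (D $$ (i,i)) \<le> sqrt (c * D $$ (j,j))" by simp
    thus "x \<le> K * y" unfolding i(3) j(3) Kc by (simp add: real_sqrt_mult)
  qed
  have main1: "\<lceil>(1 - \<delta>) * real d / (\<delta> * K + (1 - \<delta>))\<rceil> \<le> int (srank \<delta> Phi)"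
    unfolding srank_def Let_def nzs using srank_bound[OF spos srat dlen d1 delta] .
  have main2: "\<lceil>(1 - \<delta>) * real d / (\<delta> * sqrt ((1 + eps) / (1 - eps)) + (1 - \<delta>))\<rceil> \<le> int (srank \<delta> Phi)"
    if SZ1: "SZ = 1\<^sub>m a"
  proof -
    have M1: "M = 1\<^sub>m b" unfolding M_def SZ1 using Q Q_orth by simp
    have "ES \<subseteq> {1}"
    proof
      fix e assume "e \<in> ES"
      then obtain v where v: "v \<in> carrier_vec b" "v \<noteq> 0\<^sub>v b" "M *\<^sub>v v = e \<cdot>\<^sub>v v"
        unfolding ES_def eigenvalue_def eigenvector_def using Mc by auto
      have "v = e \<cdot>\<^sub>v v" using v(1,3) unfolding M1 by simp
      obtain j where j: "j < b" "v $ j \<noteq> 0" using v(1,2)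
        by (metis carrier_vecD eq_vecI index_zero_vec(1) index_zero_vec(2))
      have "v $ j = e * v $ j" using arg_cong[OF \<open>v = e \<cdot>\<^sub>v v\<close>, of "\<lambda>w. w $ j"] j v(1) by simp
      hence "e = 1" using j(2) by simp
      thus "e \<in> {1}" by simp
    qed
    hence ES1: "ES = {1}" using ES_ne by blast
    have "eta1 = 1" "etad = 1" unfolding eta1_def etad_def ES1 by simp_all
    hence "K = sqrt ((1 + eps) / (1 - eps))" unfolding K_def by simp
    thus ?thesis using main1 by simp
  qed
  show ?thesis unfolding Let_def SZ_def[symmetric] M_def[symmetric] Phi_def[symmetric] d_def[symmetric]
    ES_def[symmetric] eta1_def[symmetric] etad_def[symmetric] eps_def[symmetric]
    using main1 main2 unfolding K_def by (simp add: mult.assoc)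
qed


end
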